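(* Let $\mathcal{C}$ be a symmetric monoidal category with completely mixed states $\mu$. Specifying a dagger compact structure on $\mathcal{C}$ compatible with $\mu$ (i.e. a dagger making $\mathcal{C}$ dagger compact such that, setting $\top_A:=\mu_A^\dagger$, $\top$ is a discarding and every object has a dagger dual satisfying the discarding-compatibility equations below) is equivalent, via $\overline{\psi}=\psi^\dagger$ on states, to specifying a state dagger on $\mathcal{C}$ such that every object has a state dagger dual satisfying the discarding-compatibility equations, where $\top_A:=\overline{\mu_A}$.
   Context: Notation: $\mathcal{C}$ is a symmetric monoidal category with tensor $\otimes$, unit $I$, coherence isomorphisms (associators, unitors $\lambda,\rho$, symmetries $\sigma_{A,B}\colon A\otimes B\to B\otimes A$); unitors are suppressed. States are morphisms $I\to A$, effects are morphisms $A\to I$. Discarding: a family of effects $\top_A\colon A\to I$ with $\top_{A\otimes B}=\top_A\otimes\top_B$ and $\top_I=1_I$. Completely mixed states: a family of states $\mu_A\colon I\to A$ with $\mu_{A\otimes B}=\mu_A\otimes\mu_B$ and $\mu_I=1_I$ (not necessarily normalised). A dual of $A$ is $(A^*,\eta_A\colon I\to A^*\otimes A,\ \epsilon_A\colon A\otimes A^*\to I)$ satisfying the snake equations $(\epsilon_A\otimes 1_A)\circ(1_A\otimes\eta_A)=1_A$, $(1_{A^*}\otimes\epsilon_A)\circ(\eta_A\otimes 1_{A^*})=1_{A^*}$. Discarding-compatibility equations for a dual: $(\top_{A^*}\otimes 1_A)\circ\eta_A=\mu_A$ and $(1_{A^*}\otimes\top_A)\circ\eta_A=\mu_{A^*}$.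 Dagger compact: an identity-on-objects involutive contravariant functor $(-)^\dagger$ with $(f\otimes g)^\dagger=f^\dagger\otimes g^\dagger$, all coherence isomorphisms unitary, and every object having a dual with $\epsilon_A=(\sigma_{A^*,A}\circ\eta_A)^\dagger$ (a dagger dual). A state dagger assigns to each state $\psi$ of $A$ an effect $\overline{\psi}$ on $A$ with: $\overline{1_I}=1_I$; $\overline{\psi\otimes\phi}=\overline{\psi}\otimes\overline{\phi}$; for every state $\psi$ of $A\otimes B$ and state $\phi$ of $A$, $\overline{(\overline{\phi}\otimes 1_B)\circ\psi}=\overline{\psi}\circ(\phi\otimes 1_B)$; and for every state $\psi$ of $A$ and coherence isomorphism $\gamma\colon A\to A'$, $\overline{\gamma\circ\psi}=\overline{\psi}\circ\gamma^{-1}$. A state dagger dual is a dual with $\epsilon_A=\overline{\sigma_{A^*,A}\circ\eta_A}$. *)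

theory Defs
  imports Main
begin

text \<open>Morphisms are elements of a
type 'm, objects of a type 'o; Hom C A B is the hom-set; Cmp C g f is "g after f";
hom-sets are required to be pairwise disjoint so every morphism has a unique (co)domain.
Unitors are kept explicit (the paper suppresses them; we insert them where types demand).\<close>

record ('o, 'm) smc_data =
  Hom  :: "'o \<Rightarrow> 'o \<Rightarrow> 'm set"
  Cmp  :: "'m \<Rightarrow> 'm \<Rightarrow> 'm"
  Id   :: "'o \<Rightarrow> 'm"
  Ten  :: "'o \<Rightarrow> 'o \<Rightarrow> 'o"
  TenA :: "'m \<Rightarrow> 'm \<Rightarrow> 'm"
  Unit :: "'o"
  Asc  :: "'o \<Rightarrow> 'o \<Rightarrow> 'o \<Rightarrow> 'm"
  Lu   :: "'o \<Rightarrow> 'm"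
  Ru   :: "'o \<Rightarrow> 'm"
  Sy   :: "'o \<Rightarrow> 'o \<Rightarrow> 'm"

definition category :: "('o, 'm) smc_data \<Rightarrow> bool" where
  "category C \<longleftrightarrow>
     (\<forall>A. Id C A \<in> Hom C A A) \<and>
     (\<forall>A B D f g. f \<in> Hom C A B \<longrightarrow> g \<in> Hom C B D \<longrightarrow> Cmp C g f \<in> Hom C A D) \<and>
     (\<forall>A B D E f g h. f \<in> Hom C A B \<longrightarrow> g \<in> Hom C B D \<longrightarrow> h \<in> Hom C D E \<longrightarrow>
        Cmp C h (Cmp C g f) = Cmp C (Cmp C h g) f) \<and>
     (\<forall>A B f. f \<in> Hom C A B \<longrightarrow> Cmp C (Id C B) f = f \<and> Cmp C f (Id C A) = f) \<and>
     (\<forall>A B A' B' f. f \<in> Hom C A B \<longrightarrow> f \<in> Hom C A' B' \<longrightarrow> A = A' \<and> B = B')"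

definition is_iso :: "('o, 'm) smc_data \<Rightarrow> 'm \<Rightarrow> 'o \<Rightarrow> 'o \<Rightarrow> bool" where
  "is_iso C f A B \<longleftrightarrow> f \<in> Hom C A B \<and>
     (\<exists>g \<in> Hom C B A. Cmp C g f = Id C A \<and> Cmp C f g = Id C B)"

definition cinv :: "('o, 'm) smc_data \<Rightarrow> 'm \<Rightarrow> 'm" where
  "cinv C f = (SOME g. \<exists>A B. f \<in> Hom C A B \<and> g \<in> Hom C B A \<and>
                          Cmp C g f = Id C A \<and> Cmp C f g = Id C B)"

definition monoidal :: "('o, 'm) smc_data \<Rightarrow> bool" where
  "monoidal C \<longleftrightarrow> category C \<and>
     (\<forall>A B D E f g. f \<in> Hom C A B \<longrightarrow> g \<in> Hom C D E \<longrightarrow>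
        TenA C f g \<in> Hom C (Ten C A D) (Ten C B E)) \<and>
     (\<forall>A B. TenA C (Id C A) (Id C B) = Id C (Ten C A B)) \<and>
     (\<forall>A B D A' B' D' f g f' g'. f \<in> Hom C A B \<longrightarrow> g \<in> Hom C B D \<longrightarrow>
        f' \<in> Hom C A' B' \<longrightarrow> g' \<in> Hom C B' D' \<longrightarrow>
        TenA C (Cmp C g f) (Cmp C g' f') = Cmp C (TenA C g g') (TenA C f f')) \<and>
     (\<forall>A B D. is_iso C (Asc C A B D) (Ten C (Ten C A B) D) (Ten C A (Ten C B D))) \<and>
     (\<forall>A. is_iso C (Lu C A) (Ten C (Unit C) A) A) \<and>
     (\<forall>A. is_iso C (Ru C A) (Ten C A (Unit C)) A) \<and>
     (\<forall>A A' B B' D D' f g h. f \<in> Hom C A A' \<longrightarrow> g \<in> Hom C B B' \<longrightarrow> h \<in> Hom C D D' \<longrightarrow>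
        Cmp C (Asc C A' B' D') (TenA C (TenA C f g) h) =
        Cmp C (TenA C f (TenA C g h)) (Asc C A B D)) \<and>
     (\<forall>A A' f. f \<in> Hom C A A' \<longrightarrow>
        Cmp C (Lu C A') (TenA C (Id C (Unit C)) f) = Cmp C f (Lu C A)) \<and>
     (\<forall>A A' f. f \<in> Hom C A A' \<longrightarrow>
        Cmp C (Ru C A') (TenA C f (Id C (Unit C))) = Cmp C f (Ru C A)) \<and>
     (\<forall>A B D E.
        Cmp C (Asc C A B (Ten C D E)) (Asc C (Ten C A B) D E) =
        Cmp C (TenA C (Id C A) (Asc C B D E))
          (Cmp C (Asc C A (Ten C B D) E) (TenA C (Asc C A B D) (Id C E)))) \<and>
     (\<forall>A B. Cmp C (TenA C (Id C A) (Lu C B)) (Asc C A (Unit C) B) =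
        TenA C (Ru C A) (Id C B))"

definition symmetric_monoidal :: "('o, 'm) smc_data \<Rightarrow> bool" where
  "symmetric_monoidal C \<longleftrightarrow> monoidal C \<and>
     (\<forall>A B. Sy C A B \<in> Hom C (Ten C A B) (Ten C B A)) \<and>
     (\<forall>A A' B B' f g. f \<in> Hom C A A' \<longrightarrow> g \<in> Hom C B B' \<longrightarrow>
        Cmp C (Sy C A' B') (TenA C f g) = Cmp C (TenA C g f) (Sy C A B)) \<and>
     (\<forall>A B. Cmp C (Sy C B A) (Sy C A B) = Id C (Ten C A B)) \<and>
     (\<forall>A B D.
        Cmp C (Asc C B D A) (Cmp C (Sy C A (Ten C B D)) (Asc C A B D)) =
        Cmp C (TenA C (Id C B) (Sy C A D))
          (Cmp C (Asc C B A D) (TenA C (Sy C A B) (Id C D))))"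

inductive_set coh :: "('o, 'm) smc_data \<Rightarrow> 'm set" for C where
  coh_id:   "Id C A \<in> coh C"
| coh_asc:  "Asc C A B D \<in> coh C"
| coh_asci: "cinv C (Asc C A B D) \<in> coh C"
| coh_lu:   "Lu C A \<in> coh C"
| coh_lui:  "cinv C (Lu C A) \<in> coh C"
| coh_ru:   "Ru C A \<in> coh C"
| coh_rui:  "cinv C (Ru C A) \<in> coh C"
| coh_sy:   "Sy C A B \<in> coh C"
| coh_cmp:  "\<lbrakk>f \<in> coh C; g \<in> coh C; f \<in> Hom C A B; g \<in> Hom C B D\<rbrakk> \<Longrightarrow> Cmp C g f \<in> coh C"
| coh_ten:  "\<lbrakk>f \<in> coh C; g \<in> coh C\<rbrakk> \<Longrightarrow> TenA C f g \<in> coh C"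

definition mixed_states :: "('o, 'm) smc_data \<Rightarrow> ('o \<Rightarrow> 'm) \<Rightarrow> bool" where
  "mixed_states C mu \<longleftrightarrow>
     (\<forall>A. mu A \<in> Hom C (Unit C) A) \<and>
     (\<forall>A B. mu (Ten C A B) = Cmp C (TenA C (mu A) (mu B)) (cinv C (Lu C (Unit C)))) \<and>
     mu (Unit C) = Id C (Unit C)"

definition discarding :: "('o, 'm) smc_data \<Rightarrow> ('o \<Rightarrow> 'm) \<Rightarrow> bool" where
  "discarding C T \<longleftrightarrow>
     (\<forall>A. T A \<in> Hom C A (Unit C)) \<and>
     (\<forall>A B. T (Ten C A B) = Cmp C (Lu C (Unit C)) (TenA C (T A) (T B))) \<and>
     T (Unit C) = Id C (Unit C)"

definition is_dual :: "('o, 'm) smc_data \<Rightarrow> 'o \<Rightarrow> 'o \<Rightarrow> 'm \<Rightarrow> 'm \<Rightarrow> bool" where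
  "is_dual C A As eta eps \<longleftrightarrow>
     eta \<in> Hom C (Unit C) (Ten C As A) \<and>
     eps \<in> Hom C (Ten C A As) (Unit C) \<and>
     Cmp C (Lu C A) (Cmp C (TenA C eps (Id C A)) (Cmp C (cinv C (Asc C A As A))
        (Cmp C (TenA C (Id C A) eta) (cinv C (Ru C A))))) = Id C A \<and>
     Cmp C (Ru C As) (Cmp C (TenA C (Id C As) eps) (Cmp C (Asc C As A As)
        (Cmp C (TenA C eta (Id C As)) (cinv C (Lu C As))))) = Id C As"

definition disc_compat :: "('o, 'm) smc_data \<Rightarrow> ('o \<Rightarrow> 'm) \<Rightarrow> ('o \<Rightarrow> 'm) \<Rightarrow> 'o \<Rightarrow> 'o \<Rightarrow> 'm \<Rightarrow> bool" where
  "disc_compat C T mu A As eta \<longleftrightarrow>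
     Cmp C (Lu C A) (Cmp C (TenA C (T As) (Id C A)) eta) = mu A \<and>
     Cmp C (Ru C As) (Cmp C (TenA C (Id C As) (T A)) eta) = mu As"

definition is_dagger :: "('o, 'm) smc_data \<Rightarrow> ('m \<Rightarrow> 'm) \<Rightarrow> bool" where
  "is_dagger C d \<longleftrightarrow>
     (\<forall>A B f. f \<in> Hom C A B \<longrightarrow> d f \<in> Hom C B A \<and> d (d f) = f) \<and>
     (\<forall>A. d (Id C A) = Id C A) \<and>
     (\<forall>A B D f g. f \<in> Hom C A B \<longrightarrow> g \<in> Hom C B D \<longrightarrow> d (Cmp C g f) = Cmp C (d f) (d g)) \<and>
     (\<forall>A B D E f g. f \<in> Hom C A B \<longrightarrow> g \<in> Hom C D E \<longrightarrow> d (TenA C f g) = TenA C (d f) (d g)) \<and>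
     (\<forall>\<gamma> \<in> coh C. d \<gamma> = cinv C \<gamma>)"

definition dagger_compact :: "('o, 'm) smc_data \<Rightarrow> ('m \<Rightarrow> 'm) \<Rightarrow> bool" where
  "dagger_compact C d \<longleftrightarrow> is_dagger C d \<and>
     (\<forall>A. \<exists>As eta eps. is_dual C A As eta eps \<and> eps = d (Cmp C (Sy C As A) eta))"

definition compat_dagger :: "('o, 'm) smc_data \<Rightarrow> ('o \<Rightarrow> 'm) \<Rightarrow> ('m \<Rightarrow> 'm) \<Rightarrow> bool" where
  "compat_dagger C mu d \<longleftrightarrow> dagger_compact C d \<and>
     discarding C (\<lambda>A. d (mu A)) \<and>
     (\<forall>A. \<exists>As eta eps. is_dual C A As eta eps \<and> eps = d (Cmp C (Sy C As A) eta) \<and>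
        disc_compat C (\<lambda>B. d (mu B)) mu A As eta)"

text \<open>State dagger (only its values on states matter); unitors inserted where needed.\<close>
definition state_dagger :: "('o, 'm) smc_data \<Rightarrow> ('m \<Rightarrow> 'm) \<Rightarrow> bool" where
  "state_dagger C s \<longleftrightarrow>
     (\<forall>A \<psi>. \<psi> \<in> Hom C (Unit C) A \<longrightarrow> s \<psi> \<in> Hom C A (Unit C)) \<and>
     s (Id C (Unit C)) = Id C (Unit C) \<and>
     (\<forall>A B \<psi> \<phi>. \<psi> \<in> Hom C (Unit C) A \<longrightarrow> \<phi> \<in> Hom C (Unit C) B \<longrightarrow>
        s (Cmp C (TenA C \<psi> \<phi>) (cinv C (Lu C (Unit C)))) =
        Cmp C (Lu C (Unit C)) (TenA C (s \<psi>) (s \<phi>))) \<and>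
     (\<forall>A B \<psi> \<phi>. \<psi> \<in> Hom C (Unit C) (Ten C A B) \<longrightarrow> \<phi> \<in> Hom C (Unit C) A \<longrightarrow>
        s (Cmp C (Lu C B) (Cmp C (TenA C (s \<phi>) (Id C B)) \<psi>)) =
        Cmp C (s \<psi>) (Cmp C (TenA C \<phi> (Id C B)) (cinv C (Lu C B)))) \<and>
     (\<forall>A A' \<psi> \<gamma>. \<psi> \<in> Hom C (Unit C) A \<longrightarrow> \<gamma> \<in> coh C \<longrightarrow> \<gamma> \<in> Hom C A A' \<longrightarrow>
        s (Cmp C \<gamma> \<psi>) = Cmp C (s \<psi>) (cinv C \<gamma>))"

definition compat_state_dagger :: "('o, 'm) smc_data \<Rightarrow> ('o \<Rightarrow> 'm) \<Rightarrow> ('m \<Rightarrow> 'm) \<Rightarrow> bool" where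
  "compat_state_dagger C mu s \<longleftrightarrow> state_dagger C s \<and>
     (\<forall>A. \<exists>As eta eps. is_dual C A As eta eps \<and> eps = s (Cmp C (Sy C As A) eta) \<and>
        disc_compat C (\<lambda>B. s (mu B)) mu A As eta)"

end

theory Submission
  imports Defs
begin


locale SMC = fixes C :: "('o, 'm) smc_data" assumes smc: "symmetric_monoidal C"
begin

lemma mon: "monoidal C" using smc unfolding symmetric_monoidal_def by (rule conjunct1)
lemma cat: "category C" using mon unfolding monoidal_def by (rule conjunct1)

lemma Id_hom[intro]: "Id C A \<in> Hom C A A" using cat[unfolded category_def, THEN conjunct1] by blast
lemma Cmp_hom[intro]: "f \<in> Hom C A B \<Longrightarrow> g \<in> Hom C B D \<Longrightarrow> Cmp C g f \<in> Hom C A D"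
  using cat[unfolded category_def, THEN conjunct2, THEN conjunct1] by blast
lemma assoc: "f \<in> Hom C A B \<Longrightarrow> g \<in> Hom C B D \<Longrightarrow> h \<in> Hom C D E \<Longrightarrow>
   Cmp C h (Cmp C g f) = Cmp C (Cmp C h g) f"
  using cat[unfolded category_def, THEN conjunct2, THEN conjunct2, THEN conjunct1] by blast
lemma idl: "f \<in> Hom C A B \<Longrightarrow> Cmp C (Id C B) f = f"
  using cat[unfolded category_def, THEN conjunct2, THEN conjunct2, THEN conjunct2, THEN conjunct1] by blast
lemma idr: "f \<in> Hom C A B \<Longrightarrow> Cmp C f (Id C A) = f"
  using cat[unfolded category_def, THEN conjunct2, THEN conjunct2, THEN conjunct2, THEN conjunct1] by blast
lemma huniq: "f \<in> Hom C A B \<Longrightarrow> f \<in> Hom C A' B' \<Longrightarrow> A = A' \<and> B = B'"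
  using cat[unfolded category_def, THEN conjunct2, THEN conjunct2, THEN conjunct2, THEN conjunct2] by blast

lemma Ten_hom[intro]: "f \<in> Hom C A B \<Longrightarrow> g \<in> Hom C D E \<Longrightarrow> TenA C f g \<in> Hom C (Ten C A D) (Ten C B E)"
  using mon[unfolded monoidal_def, THEN conjunct2, THEN conjunct1] by blast
lemma ten_id: "TenA C (Id C A) (Id C B) = Id C (Ten C A B)"
  using mon[unfolded monoidal_def, THEN conjunct2, THEN conjunct2, THEN conjunct1] by blast
lemma interchange: "f \<in> Hom C A B \<Longrightarrow> g \<in> Hom C B D \<Longrightarrow>
        f' \<in> Hom C A' B' \<Longrightarrow> g' \<in> Hom C B' D' \<Longrightarrow>
        TenA C (Cmp C g f) (Cmp C g' f') = Cmp C (TenA C g g') (TenA C f f')"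
  using mon[unfolded monoidal_def, THEN conjunct2, THEN conjunct2, THEN conjunct2, THEN conjunct1] by blast
lemma asc_iso: "is_iso C (Asc C A B D) (Ten C (Ten C A B) D) (Ten C A (Ten C B D))"
  using mon[unfolded monoidal_def, THEN conjunct2, THEN conjunct2, THEN conjunct2, THEN conjunct2, THEN conjunct1] by blast
lemma lu_iso: "is_iso C (Lu C A) (Ten C (Unit C) A) A"
  using mon[unfolded monoidal_def, THEN conjunct2, THEN conjunct2, THEN conjunct2, THEN conjunct2, THEN conjunct2, THEN conjunct1] by blast
lemma ru_iso: "is_iso C (Ru C A) (Ten C A (Unit C)) A"
  using mon[unfolded monoidal_def, THEN conjunct2, THEN conjunct2, THEN conjunct2, THEN conjunct2, THEN conjunct2, THEN conjunct2, THEN conjunct1] by blast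
lemma asc_nat: "f \<in> Hom C A A' \<Longrightarrow> g \<in> Hom C B B' \<Longrightarrow> h \<in> Hom C D D' \<Longrightarrow>
        Cmp C (Asc C A' B' D') (TenA C (TenA C f g) h) =
        Cmp C (TenA C f (TenA C g h)) (Asc C A B D)"
  using mon[unfolded monoidal_def, THEN conjunct2, THEN conjunct2, THEN conjunct2, THEN conjunct2, THEN conjunct2, THEN conjunct2, THEN conjunct2, THEN conjunct1] by blast
lemma lu_nat: "f \<in> Hom C A A' \<Longrightarrow>
        Cmp C (Lu C A') (TenA C (Id C (Unit C)) f) = Cmp C f (Lu C A)"
  using mon[unfolded monoidal_def, THEN conjunct2, THEN conjunct2, THEN conjunct2, THEN conjunct2, THEN conjunct2, THEN conjunct2, THEN conjunct2, THEN conjunct2, THEN conjunct1] by blast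
lemma ru_nat: "f \<in> Hom C A A' \<Longrightarrow>
        Cmp C (Ru C A') (TenA C f (Id C (Unit C))) = Cmp C f (Ru C A)"
  using mon[unfolded monoidal_def, THEN conjunct2, THEN conjunct2, THEN conjunct2, THEN conjunct2, THEN conjunct2, THEN conjunct2, THEN conjunct2, THEN conjunct2, THEN conjunct2, THEN conjunct1] by blast
lemma Sy_hom[intro]: "Sy C A B \<in> Hom C (Ten C A B) (Ten C B A)"
  using smc[unfolded symmetric_monoidal_def, THEN conjunct2, THEN conjunct1] by blast
lemma sy_nat: "f \<in> Hom C A A' \<Longrightarrow> g \<in> Hom C B B' \<Longrightarrow>
        Cmp C (Sy C A' B') (TenA C f g) = Cmp C (TenA C g f) (Sy C A B)"
  using smc[unfolded symmetric_monoidal_def, THEN conjunct2, THEN conjunct2, THEN conjunct1] by blast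
lemma sy_inv: "Cmp C (Sy C B A) (Sy C A B) = Id C (Ten C A B)"
  using smc[unfolded symmetric_monoidal_def, THEN conjunct2, THEN conjunct2, THEN conjunct2, THEN conjunct1] by blast

lemma iso_hom: "is_iso C f A B \<Longrightarrow> f \<in> Hom C A B" unfolding is_iso_def by blast

lemma cinv_props: assumes "is_iso C f A B"
  shows "cinv C f \<in> Hom C B A \<and> Cmp C (cinv C f) f = Id C A \<and> Cmp C f (cinv C f) = Id C B"
proof -
  have ex: "\<exists>g A B. f \<in> Hom C A B \<and> g \<in> Hom C B A \<and> Cmp C g f = Id C A \<and> Cmp C f g = Id C B"
    using assms unfolding is_iso_def by blast
  have "\<exists>A' B'. f \<in> Hom C A' B' \<and> cinv C f \<in> Hom C B' A' \<and>
            Cmp C (cinv C f) f = Id C A' \<and> Cmp C f (cinv C f) = Id C B'"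
    unfolding cinv_def by (rule someI_ex) (rule ex)
  then obtain A' B' where "f \<in> Hom C A' B'" "cinv C f \<in> Hom C B' A'"
            "Cmp C (cinv C f) f = Id C A'" "Cmp C f (cinv C f) = Id C B'" by blast
  moreover have "A' = A \<and> B' = B" using huniq[OF \<open>f \<in> Hom C A' B'\<close> iso_hom[OF assms]] by blast
  ultimately show ?thesis by blast
qed

lemma cinv_hom[intro]: "is_iso C f A B \<Longrightarrow> cinv C f \<in> Hom C B A" using cinv_props by blast
lemma cinv_l: "is_iso C f A B \<Longrightarrow> Cmp C (cinv C f) f = Id C A" using cinv_props by blast
lemma cinv_r: "is_iso C f A B \<Longrightarrow> Cmp C f (cinv C f) = Id C B" using cinv_props by blast

lemma cinv_eq: assumes "f \<in> Hom C A B" "g \<in> Hom C B A" "Cmp C g f = Id C A" "Cmp C f g = Id C B"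
  shows "cinv C f = g"
proof -
  have iso: "is_iso C f A B" using assms unfolding is_iso_def by blast
  have "g = Cmp C g (Id C B)" using idr assms by metis
  also have "\<dots> = Cmp C g (Cmp C f (cinv C f))" using cinv_r[OF iso] by simp
  also have "\<dots> = Cmp C (Cmp C g f) (cinv C f)" using assoc[OF cinv_hom[OF iso] assms(1) assms(2)] .
  also have "\<dots> = cinv C f" using assms(3) idl cinv_hom[OF iso] by metis
  finally show ?thesis by simp
qed

lemma iso_cinv: "is_iso C f A B \<Longrightarrow> is_iso C (cinv C f) B A"
  unfolding is_iso_def[of _ "cinv C f"] using cinv_props iso_hom by blast
lemma cinv_cinv: "is_iso C f A B \<Longrightarrow> cinv C (cinv C f) = f"
  using cinv_eq[OF cinv_hom iso_hom] cinv_l cinv_r by blast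

lemma Asc_hom[intro]: "Asc C A B D \<in> Hom C (Ten C (Ten C A B) D) (Ten C A (Ten C B D))"
  using iso_hom[OF asc_iso] .
lemma Asci_hom[intro]: "cinv C (Asc C A B D) \<in> Hom C (Ten C A (Ten C B D)) (Ten C (Ten C A B) D)"
  using cinv_hom[OF asc_iso] .
lemma Lu_hom[intro]: "Lu C A \<in> Hom C (Ten C (Unit C) A) A" using iso_hom[OF lu_iso] .
lemma Lui_hom[intro]: "cinv C (Lu C A) \<in> Hom C A (Ten C (Unit C) A)" using cinv_hom[OF lu_iso] .
lemma Ru_hom[intro]: "Ru C A \<in> Hom C (Ten C A (Unit C)) A" using iso_hom[OF ru_iso] .
lemma Rui_hom[intro]: "cinv C (Ru C A) \<in> Hom C A (Ten C A (Unit C))" using cinv_hom[OF ru_iso] .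

lemma sy_iso: "is_iso C (Sy C A B) (Ten C A B) (Ten C B A)"
  unfolding is_iso_def using sy_inv by blast
lemma sy_cinv: "cinv C (Sy C A B) = Sy C B A"
  using cinv_eq[OF Sy_hom Sy_hom] sy_inv by blast

lemma iso_cmp: "is_iso C f A B \<Longrightarrow> is_iso C g B D \<Longrightarrow> is_iso C (Cmp C g f) A D"
proof -
  assume f: "is_iso C f A B" and g: "is_iso C g B D"
  note h = iso_hom[OF f] iso_hom[OF g] cinv_hom[OF f] cinv_hom[OF g]
  have "Cmp C (Cmp C (cinv C f) (cinv C g)) (Cmp C g f) = Cmp C (cinv C f) (Cmp C (cinv C g) (Cmp C g f))"
    using assoc[OF Cmp_hom[OF h(1) h(2)] h(4) h(3)] by simp
  also have "\<dots> = Cmp C (cinv C f) (Cmp C (Cmp C (cinv C g) g) f)"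
    using assoc[OF h(1) h(2) h(4)] by simp
  also have "\<dots> = Id C A" using cinv_l[OF g] cinv_l[OF f] idl[OF h(1)] by simp
  finally have 1: "Cmp C (Cmp C (cinv C f) (cinv C g)) (Cmp C g f) = Id C A" .
  have "Cmp C (Cmp C g f) (Cmp C (cinv C f) (cinv C g)) = Cmp C g (Cmp C f (Cmp C (cinv C f) (cinv C g)))"
    using assoc[OF Cmp_hom[OF h(4) h(3)] h(1) h(2)] by simp
  also have "\<dots> = Cmp C g (Cmp C (Cmp C f (cinv C f)) (cinv C g))"
    using assoc[OF h(4) h(3) h(1)] by simp
  also have "\<dots> = Id C D" using cinv_r[OF g] cinv_r[OF f] idl[OF h(4)] by simp
  finally have 2: "Cmp C (Cmp C g f) (Cmp C (cinv C f) (cinv C g)) = Id C D" .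
  show ?thesis unfolding is_iso_def using h 1 2 by blast
qed

lemma iso_ten: "is_iso C f A B \<Longrightarrow> is_iso C g D E \<Longrightarrow> is_iso C (TenA C f g) (Ten C A D) (Ten C B E)"
proof -
  assume f: "is_iso C f A B" and g: "is_iso C g D E"
  note h = iso_hom[OF f] iso_hom[OF g] cinv_hom[OF f] cinv_hom[OF g]
  have "Cmp C (TenA C (cinv C f) (cinv C g)) (TenA C f g) = Id C (Ten C A D)"
      using interchange[OF h(1) h(3) h(2) h(4)] cinv_l[OF f] cinv_l[OF g] ten_id by simp
  moreover have "Cmp C (TenA C f g) (TenA C (cinv C f) (cinv C g)) = Id C (Ten C B E)"
      using interchange[OF h(3) h(1) h(4) h(2)] cinv_r[OF f] cinv_r[OF g] ten_id by simp
  ultimately show ?thesis unfolding is_iso_def using h Ten_hom by blast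
qed

lemma id_iso: "is_iso C (Id C A) A A"
  unfolding is_iso_def using idl Id_hom by blast

lemma coh_iso: "\<gamma> \<in> coh C \<Longrightarrow> \<exists>A B. is_iso C \<gamma> A B"
proof (induction rule: coh.induct)
  case (coh_cmp f g A B D)
  then obtain A1 B1 A2 B2 where "is_iso C f A1 B1" "is_iso C g A2 B2" by blast
  moreover have "A1 = A \<and> B1 = B" "A2 = B \<and> B2 = D" using huniq iso_hom calculation coh_cmp.hyps by blast+
  ultimately show ?case using iso_cmp by blast
next
  case (coh_ten f g) then show ?case using iso_ten by blast
next
  case (coh_id A) then show ?case using id_iso by blast
next
  case (coh_asc A B D) then show ?case using asc_iso by blast
next
  case (coh_asci A B D) then show ?case using iso_cinv[OF asc_iso] by blast
next
  case (coh_lu A) then show ?case using lu_iso by blast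
next
  case (coh_lui A) then show ?case using iso_cinv[OF lu_iso] by blast
next
  case (coh_ru A) then show ?case using ru_iso by blast
next
  case (coh_rui A) then show ?case using iso_cinv[OF ru_iso] by blast
next
  case (coh_sy A B) then show ?case using sy_iso by blast
qed

lemma coh_iso': "\<gamma> \<in> coh C \<Longrightarrow> \<gamma> \<in> Hom C A B \<Longrightarrow> is_iso C \<gamma> A B"
proof -
  assume a: "\<gamma> \<in> coh C" "\<gamma> \<in> Hom C A B"
  then obtain A' B' where "is_iso C \<gamma> A' B'" using coh_iso by blast
  moreover have "A' = A \<and> B' = B" using huniq iso_hom calculation a by blast
  ultimately show ?thesis by simp
qed

lemma cinv_ten: "is_iso C f A B \<Longrightarrow> is_iso C g D E \<Longrightarrow> cinv C (TenA C f g) = TenA C (cinv C f) (cinv C g)"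
proof -
  assume f: "is_iso C f A B" and g: "is_iso C g D E"
  note h = iso_hom[OF f] iso_hom[OF g] cinv_hom[OF f] cinv_hom[OF g]
  show ?thesis
  proof (rule cinv_eq)
    show "Cmp C (TenA C (cinv C f) (cinv C g)) (TenA C f g) = Id C (Ten C A D)"
      using interchange[OF h(1) h(3) h(2) h(4)] cinv_l[OF f] cinv_l[OF g] ten_id by simp
    show "Cmp C (TenA C f g) (TenA C (cinv C f) (cinv C g)) = Id C (Ten C B E)"
      using interchange[OF h(3) h(1) h(4) h(2)] cinv_r[OF f] cinv_r[OF g] ten_id by simp
  qed (use h in auto)
qed

end



context SMC begin

lemma cinv_id: "cinv C (Id C A) = Id C A"
  using cinv_eq[OF Id_hom Id_hom] idl[OF Id_hom] by blast

lemma nat_inv: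
  assumes g1: "is_iso C \<gamma>1 P Q" and g2: "is_iso C \<gamma>2 P' Q'" and h: "h \<in> Hom C P' P"
    and k: "k \<in> Hom C Q' Q" and e: "Cmp C \<gamma>1 h = Cmp C k \<gamma>2"
  shows "Cmp C h (cinv C \<gamma>2) = Cmp C (cinv C \<gamma>1) k"
proof -
  note hh = iso_hom[OF g1] iso_hom[OF g2] cinv_hom[OF g1] cinv_hom[OF g2]
  have "Cmp C h (cinv C \<gamma>2) = Cmp C (Cmp C (cinv C \<gamma>1) \<gamma>1) (Cmp C h (cinv C \<gamma>2))"
    using cinv_l[OF g1] idl[OF Cmp_hom[OF hh(4) h]] by simp
  also have "\<dots> = Cmp C (cinv C \<gamma>1) (Cmp C (Cmp C \<gamma>1 h) (cinv C \<gamma>2))"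
    using assoc[OF Cmp_hom[OF hh(4) h] hh(1) hh(3)] assoc[OF hh(4) h hh(1)] by simp
  also have "\<dots> = Cmp C (cinv C \<gamma>1) (Cmp C k (Cmp C \<gamma>2 (cinv C \<gamma>2)))"
    using e assoc[OF hh(4) hh(2) k] by simp
  also have "\<dots> = Cmp C (cinv C \<gamma>1) k" using cinv_r[OF g2] idr[OF k] by simp
  finally show ?thesis .
qed

lemma ten_split1: "f \<in> Hom C A B \<Longrightarrow> g \<in> Hom C D E \<Longrightarrow>
   TenA C f g = Cmp C (TenA C f (Id C E)) (TenA C (Id C A) g)"
  using interchange[OF Id_hom _ _ Id_hom, of f A B g D E] idl idr by metis

lemma ten_split2: "f \<in> Hom C A B \<Longrightarrow> g \<in> Hom C D E \<Longrightarrow>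
   TenA C f g = Cmp C (TenA C (Id C B) g) (TenA C f (Id C D))"
  using interchange[OF _ Id_hom Id_hom, of f A B g D E] idl idr by metis

lemma tenr_cmp: "f \<in> Hom C A B \<Longrightarrow> g \<in> Hom C B D \<Longrightarrow>
   TenA C (Cmp C g f) (Id C X) = Cmp C (TenA C g (Id C X)) (TenA C f (Id C X))"
  using interchange[OF _ _ Id_hom Id_hom] idl[OF Id_hom] by metis

lemma tenl_cmp: "f \<in> Hom C A B \<Longrightarrow> g \<in> Hom C B D \<Longrightarrow>
   TenA C (Id C X) (Cmp C g f) = Cmp C (TenA C (Id C X) g) (TenA C (Id C X) f)"
  using interchange[OF Id_hom Id_hom] idl[OF Id_hom] by metis

lemma dual_homs: "is_dual C A As eta eps \<Longrightarrow> eta \<in> Hom C (Unit C) (Ten C As A) \<and> eps \<in> Hom C (Ten C A As) (Unit C)"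
  unfolding is_dual_def by blast

lemma snake1: "is_dual C A As eta eps \<Longrightarrow>
  Cmp C (Lu C A) (Cmp C (TenA C eps (Id C A)) (Cmp C (cinv C (Asc C A As A))
        (Cmp C (TenA C (Id C A) eta) (cinv C (Ru C A))))) = Id C A"
  unfolding is_dual_def by blast

lemma decomp:
  assumes du: "is_dual C A As eta eps" and f: "f \<in> Hom C A B"
  shows "f = Cmp C (Lu C B) (Cmp C (TenA C eps (Id C B)) (Cmp C (cinv C (Asc C A As B))
        (Cmp C (TenA C (Id C A) (Cmp C (TenA C (Id C As) f) eta)) (cinv C (Ru C A)))))"
proof -
  note et = dual_homs[OF du, THEN conjunct1] and ep = dual_homs[OF du, THEN conjunct2]
  define Z where "Z = Cmp C (TenA C (Id C A) eta) (cinv C (Ru C A))"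
  define Y where "Y = Cmp C (cinv C (Asc C A As A)) Z"
  define X where "X = Cmp C (TenA C eps (Id C A)) Y"
  have Z: "Z \<in> Hom C A (Ten C A (Ten C As A))" unfolding Z_def using et by blast
  have Y: "Y \<in> Hom C A (Ten C (Ten C A As) A)" unfolding Y_def using Z by blast
  have X: "X \<in> Hom C A (Ten C (Unit C) A)" unfolding X_def using Y ep by blast
  have "f = Cmp C f (Cmp C (Lu C A) X)" using snake1[OF du] idr[OF f] unfolding X_def Y_def Z_def by simp
  also have "\<dots> = Cmp C (Cmp C f (Lu C A)) X" using assoc[OF X Lu_hom f] .
  also have "\<dots> = Cmp C (Cmp C (Lu C B) (TenA C (Id C (Unit C)) f)) X" using lu_nat[OF f] by simp
  also have "\<dots> = Cmp C (Lu C B) (Cmp C (TenA C (Id C (Unit C)) f) X)"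
    using assoc[OF X Ten_hom[OF Id_hom f] Lu_hom] by simp
  also have "Cmp C (TenA C (Id C (Unit C)) f) X = Cmp C (Cmp C (TenA C (Id C (Unit C)) f) (TenA C eps (Id C A))) Y"
    unfolding X_def using assoc[OF Y Ten_hom[OF ep Id_hom] Ten_hom[OF Id_hom f]] .
  also have "Cmp C (TenA C (Id C (Unit C)) f) (TenA C eps (Id C A)) = TenA C eps f"
    using interchange[OF ep Id_hom Id_hom f] idl[OF ep] idr[OF f] by simp
  also have "\<dots> = Cmp C (TenA C eps (Id C B)) (TenA C (Id C (Ten C A As)) f)"
    using interchange[OF Id_hom ep f Id_hom] idr[OF ep] idl[OF f] by simp
  also have "Cmp C (Cmp C (TenA C eps (Id C B)) (TenA C (Id C (Ten C A As)) f)) Y =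
     Cmp C (TenA C eps (Id C B)) (Cmp C (TenA C (Id C (Ten C A As)) f) Y)"
    using assoc[OF Y Ten_hom[OF Id_hom f] Ten_hom[OF ep Id_hom]] by simp
  also have "Cmp C (TenA C (Id C (Ten C A As)) f) Y = Cmp C (Cmp C (TenA C (Id C (Ten C A As)) f) (cinv C (Asc C A As A))) Z"
    unfolding Y_def using assoc[OF Z Asci_hom Ten_hom[OF Id_hom f]] .
  also have "Cmp C (TenA C (Id C (Ten C A As)) f) (cinv C (Asc C A As A)) =
      Cmp C (cinv C (Asc C A As B)) (TenA C (Id C A) (TenA C (Id C As) f))"
    apply (rule nat_inv[OF asc_iso asc_iso])
    using asc_nat[OF Id_hom Id_hom f, of A As] ten_id f by auto
  also have "Cmp C (Cmp C (cinv C (Asc C A As B)) (TenA C (Id C A) (TenA C (Id C As) f))) Z =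
     Cmp C (cinv C (Asc C A As B)) (Cmp C (TenA C (Id C A) (TenA C (Id C As) f)) Z)"
    using assoc[OF Z Ten_hom[OF Id_hom Ten_hom[OF Id_hom f]] Asci_hom] by simp
  also have "Cmp C (TenA C (Id C A) (TenA C (Id C As) f)) Z =
      Cmp C (TenA C (Id C A) (Cmp C (TenA C (Id C As) f) eta)) (cinv C (Ru C A))"
    unfolding Z_def using assoc[OF Rui_hom Ten_hom[OF Id_hom et] Ten_hom[OF Id_hom Ten_hom[OF Id_hom f]]]
      tenl_cmp[OF et Ten_hom[OF Id_hom f]] by simp
  finally show ?thesis .
qed

lemma recover:
  assumes du: "is_dual C A As eta eps" and g: "g \<in> Hom C B A"
  shows "Cmp C (Lu C A) (Cmp C (TenA C (Cmp C eps (TenA C g (Id C As))) (Id C A)) (Cmp C (cinv C (Asc C B As A))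
        (Cmp C (TenA C (Id C B) eta) (cinv C (Ru C B))))) = g"
proof -
  note et = dual_homs[OF du, THEN conjunct1] and ep = dual_homs[OF du, THEN conjunct2]
  have "g = Cmp C (Cmp C (Lu C A) (Cmp C (TenA C eps (Id C A)) (Cmp C (cinv C (Asc C A As A))
        (Cmp C (TenA C (Id C A) eta) (cinv C (Ru C A)))))) g" using snake1[OF du] idl[OF g] by simp
  also have "\<dots> = Cmp C (Lu C A) (Cmp C (TenA C eps (Id C A)) (Cmp C (cinv C (Asc C A As A))
        (Cmp C (TenA C (Id C A) eta) (Cmp C (cinv C (Ru C A)) g))))"
  proof -
    have h1: "Cmp C (TenA C (Id C A) eta) (cinv C (Ru C A)) \<in> Hom C A (Ten C A (Ten C As A))" using et by blast
    have h2: "Cmp C (cinv C (Asc C A As A)) (Cmp C (TenA C (Id C A) eta) (cinv C (Ru C A))) \<in> Hom C A (Ten C (Ten C A As) A)"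
      using h1 by blast
    have h3: "Cmp C (TenA C eps (Id C A)) (Cmp C (cinv C (Asc C A As A)) (Cmp C (TenA C (Id C A) eta) (cinv C (Ru C A)))) \<in> Hom C A (Ten C (Unit C) A)"
      using h2 ep by blast
    show ?thesis
      using assoc[OF g h3 Lu_hom] assoc[OF g h2 Ten_hom[OF ep Id_hom]] assoc[OF g h1 Asci_hom]
        assoc[OF g Rui_hom Ten_hom[OF Id_hom et]] by simp
  qed
  also have "Cmp C (cinv C (Ru C A)) g = Cmp C (TenA C g (Id C (Unit C))) (cinv C (Ru C B))"
    by (rule nat_inv[OF ru_iso ru_iso, symmetric]) (use ru_nat[OF g] g in auto)
  also have "Cmp C (TenA C (Id C A) eta) (Cmp C (TenA C g (Id C (Unit C))) (cinv C (Ru C B))) =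
     Cmp C (TenA C g (Id C (Ten C As A))) (Cmp C (TenA C (Id C B) eta) (cinv C (Ru C B)))"
  proof -
    have "Cmp C (TenA C (Id C A) eta) (TenA C g (Id C (Unit C))) = TenA C g eta"
      using interchange[OF g Id_hom Id_hom et] idl[OF g] idr[OF et] by simp
    also have "\<dots> = Cmp C (TenA C g (Id C (Ten C As A))) (TenA C (Id C B) eta)"
      using interchange[OF Id_hom g et Id_hom] idr[OF g] idl[OF et] by simp
    finally show ?thesis
      using assoc[OF Rui_hom Ten_hom[OF g Id_hom] Ten_hom[OF Id_hom et]]
        assoc[OF Rui_hom Ten_hom[OF Id_hom et] Ten_hom[OF g Id_hom]] by simp
  qed
  also have "Cmp C (cinv C (Asc C A As A)) (Cmp C (TenA C g (Id C (Ten C As A))) (Cmp C (TenA C (Id C B) eta) (cinv C (Ru C B))))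
     = Cmp C (TenA C (TenA C g (Id C As)) (Id C A)) (Cmp C (cinv C (Asc C B As A)) (Cmp C (TenA C (Id C B) eta) (cinv C (Ru C B))))"
  proof -
    have "Cmp C (TenA C (TenA C g (Id C As)) (Id C A)) (cinv C (Asc C B As A)) =
          Cmp C (cinv C (Asc C A As A)) (TenA C g (Id C (Ten C As A)))"
      apply (rule nat_inv[OF asc_iso asc_iso])
      using asc_nat[OF g Id_hom Id_hom, of As A] ten_id g by auto
    then show ?thesis
      using assoc[OF Cmp_hom[OF Rui_hom Ten_hom[OF Id_hom et]] Asci_hom Ten_hom[OF Ten_hom[OF g Id_hom] Id_hom]]
        assoc[OF Cmp_hom[OF Rui_hom Ten_hom[OF Id_hom et]] Ten_hom[OF g Id_hom] Asci_hom] by simp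
  qed
  also have "Cmp C (TenA C eps (Id C A)) (Cmp C (TenA C (TenA C g (Id C As)) (Id C A)) (Cmp C (cinv C (Asc C B As A)) (Cmp C (TenA C (Id C B) eta) (cinv C (Ru C B)))))
    = Cmp C (TenA C (Cmp C eps (TenA C g (Id C As))) (Id C A)) (Cmp C (cinv C (Asc C B As A)) (Cmp C (TenA C (Id C B) eta) (cinv C (Ru C B))))"
    using tenr_cmp[OF Ten_hom[OF g Id_hom] ep, of A]
      assoc[OF Cmp_hom[OF Cmp_hom[OF Rui_hom Ten_hom[OF Id_hom et]] Asci_hom] Ten_hom[OF Ten_hom[OF g Id_hom] Id_hom] Ten_hom[OF ep Id_hom]]
    by simp
  finally show ?thesis by simp
qed

end



locale SD = SMC C for C :: "('o, 'm) smc_data" +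
  fixes s :: "'m \<Rightarrow> 'm"
  assumes sd: "state_dagger C s"
    and duals: "\<forall>A. \<exists>As eta eps. is_dual C A As eta eps \<and> eps = s (Cmp C (Sy C As A) eta)"
begin

lemma s_hom[intro]: "\<psi> \<in> Hom C (Unit C) A \<Longrightarrow> s \<psi> \<in> Hom C A (Unit C)"
  using sd[unfolded state_dagger_def, THEN conjunct1] by blast
lemma s_id: "s (Id C (Unit C)) = Id C (Unit C)"
  using sd[unfolded state_dagger_def, THEN conjunct2, THEN conjunct1] by blast
lemma s_ten: "\<psi> \<in> Hom C (Unit C) A \<Longrightarrow> \<phi> \<in> Hom C (Unit C) B \<Longrightarrow>
        s (Cmp C (TenA C \<psi> \<phi>) (cinv C (Lu C (Unit C)))) =
        Cmp C (Lu C (Unit C)) (TenA C (s \<psi>) (s \<phi>))"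
  using sd[unfolded state_dagger_def, THEN conjunct2, THEN conjunct2, THEN conjunct1] by blast
lemma s_part: "\<psi> \<in> Hom C (Unit C) (Ten C A B) \<Longrightarrow> \<phi> \<in> Hom C (Unit C) A \<Longrightarrow>
        s (Cmp C (Lu C B) (Cmp C (TenA C (s \<phi>) (Id C B)) \<psi>)) =
        Cmp C (s \<psi>) (Cmp C (TenA C \<phi> (Id C B)) (cinv C (Lu C B)))"
  using sd[unfolded state_dagger_def, THEN conjunct2, THEN conjunct2, THEN conjunct2, THEN conjunct1] by blast
lemma s_coh: "\<psi> \<in> Hom C (Unit C) A \<Longrightarrow> \<gamma> \<in> coh C \<Longrightarrow> \<gamma> \<in> Hom C A A' \<Longrightarrow>
        s (Cmp C \<gamma> \<psi>) = Cmp C (s \<psi>) (cinv C \<gamma>)"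
  using sd[unfolded state_dagger_def, THEN conjunct2, THEN conjunct2, THEN conjunct2, THEN conjunct2] by blast

definition adj0 where "adj0 f g A B \<longleftrightarrow> f \<in> Hom C A B \<and> g \<in> Hom C B A \<and>
   (\<forall>\<psi> \<in> Hom C (Unit C) A. s (Cmp C f \<psi>) = Cmp C (s \<psi>) g)"

definition adj where "adj f g A B \<longleftrightarrow> f \<in> Hom C A B \<and> g \<in> Hom C B A \<and>
   (\<forall>X. adj0 (TenA C f (Id C X)) (TenA C g (Id C X)) (Ten C A X) (Ten C B X))"

lemma adj0_comp: assumes "adj0 f g A B" "adj0 f' g' B D" shows "adj0 (Cmp C f' f) (Cmp C g g') A D"
proof -
  have f: "f \<in> Hom C A B" and g: "g \<in> Hom C B A" and f': "f' \<in> Hom C B D" and g': "g' \<in> Hom C D B"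
    using assms unfolding adj0_def by blast+
  { fix \<psi> assume p: "\<psi> \<in> Hom C (Unit C) A"
    have "s (Cmp C (Cmp C f' f) \<psi>) = s (Cmp C f' (Cmp C f \<psi>))" using assoc[OF p f f'] by simp
    also have "\<dots> = Cmp C (s (Cmp C f \<psi>)) g'" using assms(2) Cmp_hom[OF p f] unfolding adj0_def by blast
    also have "\<dots> = Cmp C (Cmp C (s \<psi>) g) g'" using assms(1) p unfolding adj0_def by simp
    also have "\<dots> = Cmp C (s \<psi>) (Cmp C g g')" using assoc[OF g' g s_hom[OF p]] by simp
    finally have "s (Cmp C (Cmp C f' f) \<psi>) = Cmp C (s \<psi>) (Cmp C g g')" . }
  then show ?thesis unfolding adj0_def using f g f' g' by blast
qed

lemma adj0_coh: assumes "\<gamma> \<in> coh C" "\<gamma> \<in> Hom C A B" shows "adj0 \<gamma> (cinv C \<gamma>) A B"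
  unfolding adj0_def using assms s_coh cinv_hom[OF coh_iso'[OF assms]] by blast

lemma adj0_cohinv: assumes "\<gamma> \<in> coh C" "\<gamma> \<in> Hom C A B" shows "adj0 (cinv C \<gamma>) \<gamma> B A"
proof -
  note i = coh_iso'[OF assms]
  { fix \<psi> assume p: "\<psi> \<in> Hom C (Unit C) B"
    define \<psi>' where "\<psi>' = Cmp C (cinv C \<gamma>) \<psi>"
    have p': "\<psi>' \<in> Hom C (Unit C) A" unfolding \<psi>'_def using p cinv_hom[OF i] by blast
    have "\<psi> = Cmp C \<gamma> \<psi>'" unfolding \<psi>'_def using assoc[OF p cinv_hom[OF i] assms(2)] cinv_r[OF i] idl[OF p] by simp
    then have "s \<psi> = Cmp C (s \<psi>') (cinv C \<gamma>)" using s_coh[OF p' assms] by simp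
    then have "Cmp C (s \<psi>) \<gamma> = s \<psi>'"
      using assoc[OF assms(2) cinv_hom[OF i] s_hom[OF p']] cinv_l[OF i] idr[OF s_hom[OF p']] by simp
    then have "s (Cmp C (cinv C \<gamma>) \<psi>) = Cmp C (s \<psi>) \<gamma>" unfolding \<psi>'_def by simp }
  then show ?thesis unfolding adj0_def using assms cinv_hom[OF i] by blast
qed

lemma adj0_eff: assumes ph: "\<phi> \<in> Hom C (Unit C) Y"
  shows "adj0 (TenA C (s \<phi>) (Id C Z)) (TenA C \<phi> (Id C Z)) (Ten C Y Z) (Ten C (Unit C) Z)"
proof -
  { fix \<Psi> assume P: "\<Psi> \<in> Hom C (Unit C) (Ten C Y Z)"
    have m: "Cmp C (TenA C (s \<phi>) (Id C Z)) \<Psi> \<in> Hom C (Unit C) (Ten C (Unit C) Z)" using P ph by blast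
    have "Cmp C (TenA C (s \<phi>) (Id C Z)) \<Psi> = Cmp C (cinv C (Lu C Z)) (Cmp C (Lu C Z) (Cmp C (TenA C (s \<phi>) (Id C Z)) \<Psi>))"
      using assoc[OF m Lu_hom Lui_hom] cinv_l[OF lu_iso] idl[OF m] by simp
    then have "s (Cmp C (TenA C (s \<phi>) (Id C Z)) \<Psi>) = Cmp C (s (Cmp C (Lu C Z) (Cmp C (TenA C (s \<phi>) (Id C Z)) \<Psi>))) (cinv C (cinv C (Lu C Z)))"
      using s_coh[OF Cmp_hom[OF m Lu_hom] coh_lui Lui_hom] by simp
    also have "\<dots> = Cmp C (Cmp C (s \<Psi>) (Cmp C (TenA C \<phi> (Id C Z)) (cinv C (Lu C Z)))) (Lu C Z)"
      using s_part[OF P ph] cinv_cinv[OF lu_iso] by simp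
    also have "\<dots> = Cmp C (s \<Psi>) (TenA C \<phi> (Id C Z))"
      using assoc[OF Lu_hom Lui_hom Ten_hom[OF ph Id_hom]] assoc[OF Lu_hom Cmp_hom[OF Lui_hom Ten_hom[OF ph Id_hom]] s_hom[OF P]]
        cinv_l[OF lu_iso] idr[OF Ten_hom[OF ph Id_hom]] by simp
    finally have "s (Cmp C (TenA C (s \<phi>) (Id C Z)) \<Psi>) = Cmp C (s \<Psi>) (TenA C \<phi> (Id C Z))" . }
  then show ?thesis unfolding adj0_def using ph by blast
qed

lemma adj0_st: assumes ph: "\<phi> \<in> Hom C (Unit C) Y"
  shows "adj0 (TenA C \<phi> (Id C Z)) (TenA C (s \<phi>) (Id C Z)) (Ten C (Unit C) Z) (Ten C Y Z)"
proof -
  { fix \<Psi> assume P: "\<Psi> \<in> Hom C (Unit C) (Ten C (Unit C) Z)"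
    define \<chi> where "\<chi> = Cmp C (Lu C Z) \<Psi>"
    have X: "\<chi> \<in> Hom C (Unit C) Z" unfolding \<chi>_def using P by blast
    have Pe: "\<Psi> = Cmp C (cinv C (Lu C Z)) \<chi>"
      unfolding \<chi>_def using assoc[OF P Lu_hom Lui_hom] cinv_l[OF lu_iso] idl[OF P] by simp
    have n: "Cmp C (cinv C (Lu C Z)) \<chi> = Cmp C (TenA C (Id C (Unit C)) \<chi>) (cinv C (Lu C (Unit C)))"
      by (rule nat_inv[OF lu_iso lu_iso, symmetric]) (use lu_nat[OF X] X in auto)
    have "Cmp C (TenA C \<phi> (Id C Z)) \<Psi> = Cmp C (Cmp C (TenA C \<phi> (Id C Z)) (TenA C (Id C (Unit C)) \<chi>)) (cinv C (Lu C (Unit C)))"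
      using Pe n assoc[OF Lui_hom Ten_hom[OF Id_hom X] Ten_hom[OF ph Id_hom]] by simp
    also have "Cmp C (TenA C \<phi> (Id C Z)) (TenA C (Id C (Unit C)) \<chi>) = TenA C \<phi> \<chi>"
      using interchange[OF Id_hom ph X Id_hom] idr[OF ph] idl[OF X] by simp
    finally have "s (Cmp C (TenA C \<phi> (Id C Z)) \<Psi>) = Cmp C (Lu C (Unit C)) (TenA C (s \<phi>) (s \<chi>))"
      using s_ten[OF ph X] by simp
    also have "TenA C (s \<phi>) (s \<chi>) = Cmp C (TenA C (Id C (Unit C)) (s \<chi>)) (TenA C (s \<phi>) (Id C Z))"
      using interchange[OF s_hom[OF ph] Id_hom Id_hom s_hom[OF X]] idl[OF s_hom[OF ph]] idr[OF s_hom[OF X]] by simp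
    also have "Cmp C (Lu C (Unit C)) (Cmp C (TenA C (Id C (Unit C)) (s \<chi>)) (TenA C (s \<phi>) (Id C Z)))
       = Cmp C (Cmp C (s \<chi>) (Lu C Z)) (TenA C (s \<phi>) (Id C Z))"
      using assoc[OF Ten_hom[OF s_hom[OF ph] Id_hom] Ten_hom[OF Id_hom s_hom[OF X]] Lu_hom] lu_nat[OF s_hom[OF X]] by simp
    also have "s (Cmp C (cinv C (Lu C Z)) \<chi>) = Cmp C (s \<chi>) (Lu C Z)"
      using s_coh[OF X coh_lui Lui_hom] cinv_cinv[OF lu_iso] by simp
    then have "Cmp C (s \<chi>) (Lu C Z) = s \<Psi>" using Pe by simp
    finally have "s (Cmp C (TenA C \<phi> (Id C Z)) \<Psi>) = Cmp C (s \<Psi>) (TenA C (s \<phi>) (Id C Z))" . }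
  then show ?thesis unfolding adj0_def using ph by blast
qed

lemma adjD: "adj f g A B \<Longrightarrow> f \<in> Hom C A B \<and> g \<in> Hom C B A"
  unfolding adj_def by blast

lemma adj_comp: assumes a: "adj f g A B" and b: "adj f' g' B D" shows "adj (Cmp C f' f) (Cmp C g g') A D"
proof -
  have f: "f \<in> Hom C A B" and g: "g \<in> Hom C B A" and f': "f' \<in> Hom C B D" and g': "g' \<in> Hom C D B"
    using a b unfolding adj_def by blast+
  { fix X
    have "adj0 (Cmp C (TenA C f' (Id C X)) (TenA C f (Id C X))) (Cmp C (TenA C g (Id C X)) (TenA C g' (Id C X))) (Ten C A X) (Ten C D X)"
      using adj0_comp[of "TenA C f (Id C X)" "TenA C g (Id C X)" "Ten C A X" "Ten C B X"] a b unfolding adj_def by blast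
    then have "adj0 (TenA C (Cmp C f' f) (Id C X)) (TenA C (Cmp C g g') (Id C X)) (Ten C A X) (Ten C D X)"
      using tenr_cmp[OF f f'] tenr_cmp[OF g' g] by simp }
  then show ?thesis unfolding adj_def using f g f' g' by blast
qed

lemma adj_coh: assumes "\<gamma> \<in> coh C" "\<gamma> \<in> Hom C A B" shows "adj \<gamma> (cinv C \<gamma>) A B"
proof -
  note i = coh_iso'[OF assms]
  { fix X
    have c: "TenA C \<gamma> (Id C X) \<in> coh C" using coh.coh_ten[OF assms(1) coh.coh_id] .
    have "adj0 (TenA C \<gamma> (Id C X)) (cinv C (TenA C \<gamma> (Id C X))) (Ten C A X) (Ten C B X)"
      using adj0_coh[OF c Ten_hom[OF assms(2) Id_hom]] .
    then have "adj0 (TenA C \<gamma> (Id C X)) (TenA C (cinv C \<gamma>) (Id C X)) (Ten C A X) (Ten C B X)"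
      using cinv_ten[OF i id_iso] cinv_id by simp }
  then show ?thesis unfolding adj_def using assms cinv_hom[OF i] by blast
qed

lemma adj_cohinv: assumes "\<gamma> \<in> coh C" "\<gamma> \<in> Hom C A B" shows "adj (cinv C \<gamma>) \<gamma> B A"
proof -
  note i = coh_iso'[OF assms]
  { fix X
    have c: "TenA C \<gamma> (Id C X) \<in> coh C" using coh.coh_ten[OF assms(1) coh.coh_id] .
    have "adj0 (cinv C (TenA C \<gamma> (Id C X))) (TenA C \<gamma> (Id C X)) (Ten C B X) (Ten C A X)"
      using adj0_cohinv[OF c Ten_hom[OF assms(2) Id_hom]] .
    then have "adj0 (TenA C (cinv C \<gamma>) (Id C X)) (TenA C \<gamma> (Id C X)) (Ten C B X) (Ten C A X)"
      using cinv_ten[OF i id_iso] cinv_id by simp }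
  then show ?thesis unfolding adj_def using assms cinv_hom[OF i] by blast
qed

lemma adj_id: "adj (Id C A) (Id C A) A A"
  using adj_coh[OF coh.coh_id Id_hom] cinv_id by simp

lemma adj_eff: "\<phi> \<in> Hom C (Unit C) Y \<Longrightarrow> adj (s \<phi>) \<phi> Y (Unit C)"
  unfolding adj_def using adj0_eff s_hom by simp

lemma adj_st: "\<phi> \<in> Hom C (Unit C) Y \<Longrightarrow> adj \<phi> (s \<phi>) (Unit C) Y"
  unfolding adj_def using adj0_st s_hom by simp

lemma tr: assumes h: "h \<in> Hom C P Q"
  shows "TenA C (TenA C h (Id C Y)) (Id C X) = Cmp C (cinv C (Asc C Q Y X)) (Cmp C (TenA C h (Id C (Ten C Y X))) (Asc C P Y X))"
proof -
  have m: "TenA C (TenA C h (Id C Y)) (Id C X) \<in> Hom C (Ten C (Ten C P Y) X) (Ten C (Ten C Q Y) X)" using h by blast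
  have "TenA C (TenA C h (Id C Y)) (Id C X) = Cmp C (cinv C (Asc C Q Y X)) (Cmp C (Asc C Q Y X) (TenA C (TenA C h (Id C Y)) (Id C X)))"
    using assoc[OF m Asc_hom Asci_hom] cinv_l[OF asc_iso] idl[OF m] by simp
  also have "Cmp C (Asc C Q Y X) (TenA C (TenA C h (Id C Y)) (Id C X)) = Cmp C (TenA C h (Id C (Ten C Y X))) (Asc C P Y X)"
    using asc_nat[OF h Id_hom Id_hom] ten_id by simp
  finally show ?thesis .
qed

lemma adj_tenr: assumes a: "adj f g A B" shows "adj (TenA C f (Id C Y)) (TenA C g (Id C Y)) (Ten C A Y) (Ten C B Y)"
proof -
  have f: "f \<in> Hom C A B" and g: "g \<in> Hom C B A" using a unfolding adj_def by blast+
  { fix X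
    have a1: "adj0 (Asc C A Y X) (cinv C (Asc C A Y X)) (Ten C (Ten C A Y) X) (Ten C A (Ten C Y X))"
      using adj0_coh[OF coh.coh_asc Asc_hom] .
    have a2: "adj0 (TenA C f (Id C (Ten C Y X))) (TenA C g (Id C (Ten C Y X))) (Ten C A (Ten C Y X)) (Ten C B (Ten C Y X))"
      using a unfolding adj_def by blast
    have a3: "adj0 (cinv C (Asc C B Y X)) (Asc C B Y X) (Ten C B (Ten C Y X)) (Ten C (Ten C B Y) X)"
      using adj0_cohinv[OF coh.coh_asc Asc_hom] .
    have "adj0 (Cmp C (cinv C (Asc C B Y X)) (Cmp C (TenA C f (Id C (Ten C Y X))) (Asc C A Y X)))
          (Cmp C (Cmp C (cinv C (Asc C A Y X)) (TenA C g (Id C (Ten C Y X)))) (Asc C B Y X)) (Ten C (Ten C A Y) X) (Ten C (Ten C B Y) X)"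
      using adj0_comp[OF adj0_comp[OF a1 a2] a3] .
    then have "adj0 (TenA C (TenA C f (Id C Y)) (Id C X)) (TenA C (TenA C g (Id C Y)) (Id C X)) (Ten C (Ten C A Y) X) (Ten C (Ten C B Y) X)"
      using tr[OF f] tr[OF g] assoc[OF Asc_hom Ten_hom[OF g Id_hom] Asci_hom] by simp }
  then show ?thesis unfolding adj_def using f g by blast
qed

lemma sl: assumes h: "h \<in> Hom C P Q"
  shows "TenA C (Id C Y) h = Cmp C (Sy C Q Y) (Cmp C (TenA C h (Id C Y)) (Sy C Y P))"
proof -
  have "Cmp C (Sy C Q Y) (Cmp C (TenA C h (Id C Y)) (Sy C Y P)) = Cmp C (Cmp C (Sy C Q Y) (TenA C h (Id C Y))) (Sy C Y P)"
    using assoc[OF Sy_hom Ten_hom[OF h Id_hom] Sy_hom] .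
  also have "\<dots> = Cmp C (Cmp C (TenA C (Id C Y) h) (Sy C P Y)) (Sy C Y P)" using sy_nat[OF h Id_hom] by simp
  also have "\<dots> = TenA C (Id C Y) h"
    using assoc[OF Sy_hom Sy_hom Ten_hom[OF Id_hom h]] sy_inv idr[OF Ten_hom[OF Id_hom h]] by simp
  finally show ?thesis by simp
qed

lemma adj_tenl: assumes a: "adj f g A B" shows "adj (TenA C (Id C Y) f) (TenA C (Id C Y) g) (Ten C Y A) (Ten C Y B)"
proof -
  have f: "f \<in> Hom C A B" and g: "g \<in> Hom C B A" using a unfolding adj_def by blast+
  have s1: "adj (Sy C Y A) (Sy C A Y) (Ten C Y A) (Ten C A Y)" using adj_coh[OF coh.coh_sy Sy_hom] sy_cinv by simp
  have s2: "adj (Sy C B Y) (Sy C Y B) (Ten C B Y) (Ten C Y B)" using adj_coh[OF coh.coh_sy Sy_hom] sy_cinv by simp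
  have "adj (Cmp C (Sy C B Y) (Cmp C (TenA C f (Id C Y)) (Sy C Y A)))
      (Cmp C (Cmp C (Sy C A Y) (TenA C g (Id C Y))) (Sy C Y B)) (Ten C Y A) (Ten C Y B)"
    using adj_comp[OF adj_comp[OF s1 adj_tenr[OF a]] s2] .
  then show ?thesis using sl[OF f] sl[OF g] assoc[OF Sy_hom Ten_hom[OF g Id_hom] Sy_hom] by simp
qed

lemma adj_ten: assumes a: "adj f g A B" and b: "adj f' g' A' B'"
  shows "adj (TenA C f f') (TenA C g g') (Ten C A A') (Ten C B B')"
proof -
  have f: "f \<in> Hom C A B" and g: "g \<in> Hom C B A" using a unfolding adj_def by blast+
  have f': "f' \<in> Hom C A' B'" and g': "g' \<in> Hom C B' A'" using b unfolding adj_def by blast+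
  have "adj (Cmp C (TenA C f (Id C B')) (TenA C (Id C A) f')) (Cmp C (TenA C (Id C A) g') (TenA C g (Id C B'))) (Ten C A A') (Ten C B B')"
    using adj_comp[OF adj_tenl[OF b] adj_tenr[OF a]] .
  then show ?thesis using ten_split1[OF f f'] ten_split2[OF g g'] by simp
qed

lemma adj0_app: "adj0 f g A B \<Longrightarrow> \<psi> \<in> Hom C (Unit C) A \<Longrightarrow> s (Cmp C f \<psi>) = Cmp C (s \<psi>) g"
  unfolding adj0_def by blast

lemma adj_uniq: assumes a: "adj f g A B" and b: "adj f g' A B" shows "g = g'"
proof -
  obtain As eta eps where du: "is_dual C A As eta eps" and e: "eps = s (Cmp C (Sy C As A) eta)"
    using duals by blast
  note et = dual_homs[OF du, THEN conjunct1] and ep = dual_homs[OF du, THEN conjunct2]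
  have p: "Cmp C (Sy C As A) eta \<in> Hom C (Unit C) (Ten C A As)" using et by blast
  have g: "g \<in> Hom C B A" and g': "g' \<in> Hom C B A" using a b unfolding adj_def by blast+
  have a0: "adj0 (TenA C f (Id C As)) (TenA C g (Id C As)) (Ten C A As) (Ten C B As)" using a unfolding adj_def by blast
  have b0: "adj0 (TenA C f (Id C As)) (TenA C g' (Id C As)) (Ten C A As) (Ten C B As)" using b unfolding adj_def by blast
  have eq: "Cmp C eps (TenA C g (Id C As)) = Cmp C eps (TenA C g' (Id C As))"
    using adj0_app[OF a0 p] adj0_app[OF b0 p] unfolding e[symmetric] by simp
  have "g = Cmp C (Lu C A) (Cmp C (TenA C (Cmp C eps (TenA C g (Id C As))) (Id C A)) (Cmp C (cinv C (Asc C B As A))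
        (Cmp C (TenA C (Id C B) eta) (cinv C (Ru C B)))))" using recover[OF du g] by simp
  also have "\<dots> = Cmp C (Lu C A) (Cmp C (TenA C (Cmp C eps (TenA C g' (Id C As))) (Id C A)) (Cmp C (cinv C (Asc C B As A))
        (Cmp C (TenA C (Id C B) eta) (cinv C (Ru C B)))))" using eq by simp
  also have "\<dots> = g'" using recover[OF du g'] .
  finally show ?thesis .
qed

definition Sadj where "Sadj f A B \<longleftrightarrow> (\<exists>g. adj f g A B \<and> adj g f B A)"

lemma Sadj_comp: "Sadj f A B \<Longrightarrow> Sadj f' B D \<Longrightarrow> Sadj (Cmp C f' f) A D"
  unfolding Sadj_def using adj_comp by blast
lemma Sadj_tenr: "Sadj f A B \<Longrightarrow> Sadj (TenA C f (Id C Y)) (Ten C A Y) (Ten C B Y)"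
  unfolding Sadj_def using adj_tenr by blast
lemma Sadj_tenl: "Sadj f A B \<Longrightarrow> Sadj (TenA C (Id C Y) f) (Ten C Y A) (Ten C Y B)"
  unfolding Sadj_def using adj_tenl by blast
lemma Sadj_coh: "\<gamma> \<in> coh C \<Longrightarrow> \<gamma> \<in> Hom C A B \<Longrightarrow> Sadj \<gamma> A B"
  unfolding Sadj_def using adj_coh adj_cohinv by blast
lemma Sadj_cohinv: "\<gamma> \<in> coh C \<Longrightarrow> \<gamma> \<in> Hom C A B \<Longrightarrow> Sadj (cinv C \<gamma>) B A"
  unfolding Sadj_def using adj_coh adj_cohinv by blast
lemma Sadj_eff: "\<phi> \<in> Hom C (Unit C) Y \<Longrightarrow> Sadj (s \<phi>) Y (Unit C)"
  unfolding Sadj_def using adj_eff adj_st by blast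
lemma Sadj_st: "\<phi> \<in> Hom C (Unit C) Y \<Longrightarrow> Sadj \<phi> (Unit C) Y"
  unfolding Sadj_def using adj_eff adj_st by blast

lemma Sadj_all: assumes f: "f \<in> Hom C A B" shows "Sadj f A B"
proof -
  obtain As eta eps where du: "is_dual C A As eta eps" and e: "eps = s (Cmp C (Sy C As A) eta)"
    using duals by blast
  note et = dual_homs[OF du, THEN conjunct1]
  have p: "Cmp C (Sy C As A) eta \<in> Hom C (Unit C) (Ten C A As)" using et by blast
  have n: "Cmp C (TenA C (Id C As) f) eta \<in> Hom C (Unit C) (Ten C As B)" using et f by blast
  have "Sadj (Cmp C (Lu C B) (Cmp C (TenA C eps (Id C B)) (Cmp C (cinv C (Asc C A As B))
        (Cmp C (TenA C (Id C A) (Cmp C (TenA C (Id C As) f) eta)) (cinv C (Ru C A)))))) A B"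
    apply (rule Sadj_comp[OF Sadj_comp[OF Sadj_comp[OF Sadj_comp]]])
    apply (rule Sadj_cohinv[OF coh.coh_ru Ru_hom])
    apply (rule Sadj_tenl[OF Sadj_st[OF n]])
    apply (rule Sadj_cohinv[OF coh.coh_asc Asc_hom])
    apply (unfold e, rule Sadj_tenr[OF Sadj_eff[OF p]])
    apply (rule Sadj_coh[OF coh.coh_lu Lu_hom])
    done
  then show ?thesis using decomp[OF du f] by simp
qed

definition dg where "dg f = (SOME g. \<exists>A B. adj f g A B)"

lemma dg_adj: assumes f: "f \<in> Hom C A B" shows "adj f (dg f) A B \<and> adj (dg f) f B A"
proof -
  obtain g where g: "adj f g A B" "adj g f B A" using Sadj_all[OF f] unfolding Sadj_def by blast
  have "\<exists>A B. adj f (dg f) A B" unfolding dg_def by (rule someI_ex) (use g in blast)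
  then obtain A' B' where a: "adj f (dg f) A' B'" by blast
  then have "A' = A \<and> B' = B" using huniq[OF _ f] adjD by blast
  then have "adj f (dg f) A B" using a by simp
  then have "dg f = g" using adj_uniq g by blast
  then show ?thesis using g \<open>adj f (dg f) A B\<close> by simp
qed

lemma dg_eq: "adj f g A B \<Longrightarrow> dg f = g"
proof -
  assume a: "adj f g A B"
  then have "adj f (dg f) A B" using dg_adj adjD by blast
  then show ?thesis using adj_uniq a by blast
qed

end



context SMC begin

lemma dag_facts: assumes "is_dagger C d"
  shows "f \<in> Hom C A B \<Longrightarrow> d f \<in> Hom C B A"
    and "f \<in> Hom C A B \<Longrightarrow> d (d f) = f"
    and "d (Id C A) = Id C A"
    and "f \<in> Hom C A B \<Longrightarrow> g \<in> Hom C B D \<Longrightarrow> d (Cmp C g f) = Cmp C (d f) (d g)"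
    and "f \<in> Hom C A B \<Longrightarrow> g \<in> Hom C D E \<Longrightarrow> d (TenA C f g) = TenA C (d f) (d g)"
    and "\<gamma> \<in> coh C \<Longrightarrow> d \<gamma> = cinv C \<gamma>"
  using assms[unfolded is_dagger_def, THEN conjunct1] apply blast
  using assms[unfolded is_dagger_def, THEN conjunct1] apply blast
  using assms[unfolded is_dagger_def, THEN conjunct2, THEN conjunct1] apply blast
  using assms[unfolded is_dagger_def, THEN conjunct2, THEN conjunct2, THEN conjunct1] apply blast
  using assms[unfolded is_dagger_def, THEN conjunct2, THEN conjunct2, THEN conjunct2, THEN conjunct1] apply blast
  using assms[unfolded is_dagger_def, THEN conjunct2, THEN conjunct2, THEN conjunct2, THEN conjunct2] apply blast
  done

lemma part1: assumes cd: "compat_dagger C mu d" shows "compat_state_dagger C mu d"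
proof -
  have dc: "dagger_compact C d" using cd unfolding compat_dagger_def by blast
  have dg: "is_dagger C d" using dc unfolding dagger_compact_def by blast
  note D = dag_facts[OF dg]
  have "state_dagger C d"
    unfolding state_dagger_def
  proof (intro conjI allI impI)
    show "\<And>A \<psi>. \<psi> \<in> Hom C (Unit C) A \<Longrightarrow> d \<psi> \<in> Hom C A (Unit C)" using D(1) by blast
    show "d (Id C (Unit C)) = Id C (Unit C)" using D(3) .
    fix A B \<psi> \<phi>
    assume p: "\<psi> \<in> Hom C (Unit C) A" and q: "\<phi> \<in> Hom C (Unit C) B"
    show "d (Cmp C (TenA C \<psi> \<phi>) (cinv C (Lu C (Unit C)))) = Cmp C (Lu C (Unit C)) (TenA C (d \<psi>) (d \<phi>))"
      using D(4)[OF Lui_hom Ten_hom[OF p q]] D(5)[OF p q] D(6)[OF coh.coh_lui] cinv_cinv[OF lu_iso] by simp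
  next
    fix A B \<psi> \<phi>
    assume p: "\<psi> \<in> Hom C (Unit C) (Ten C A B)" and q: "\<phi> \<in> Hom C (Unit C) A"
    have dq: "d \<phi> \<in> Hom C A (Unit C)" using D(1)[OF q] .
    have "d (Cmp C (Lu C B) (Cmp C (TenA C (d \<phi>) (Id C B)) \<psi>)) = Cmp C (d (Cmp C (TenA C (d \<phi>) (Id C B)) \<psi>)) (d (Lu C B))"
      using D(4)[OF Cmp_hom[OF p Ten_hom[OF dq Id_hom]] Lu_hom] .
    also have "\<dots> = Cmp C (Cmp C (d \<psi>) (TenA C \<phi> (Id C B))) (cinv C (Lu C B))"
      using D(4)[OF p Ten_hom[OF dq Id_hom]] D(5)[OF dq Id_hom] D(2)[OF q] D(3) D(6)[OF coh.coh_lu] by simp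
    also have "\<dots> = Cmp C (d \<psi>) (Cmp C (TenA C \<phi> (Id C B)) (cinv C (Lu C B)))"
      using assoc[OF Lui_hom Ten_hom[OF q Id_hom] D(1)[OF p]] by simp
    finally show "d (Cmp C (Lu C B) (Cmp C (TenA C (d \<phi>) (Id C B)) \<psi>)) =
        Cmp C (d \<psi>) (Cmp C (TenA C \<phi> (Id C B)) (cinv C (Lu C B)))" .
  next
    fix A A' \<psi> \<gamma>
    assume p: "\<psi> \<in> Hom C (Unit C) A" and c1: "\<gamma> \<in> coh C" and c2: "\<gamma> \<in> Hom C A A'"
    then show "d (Cmp C \<gamma> \<psi>) = Cmp C (d \<psi>) (cinv C \<gamma>)" using D(4)[OF p c2] D(6)[OF c1] by simp
  qed
  moreover have "\<forall>A. \<exists>As eta eps. is_dual C A As eta eps \<and> eps = d (Cmp C (Sy C As A) eta) \<and>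
        disc_compat C (\<lambda>B. d (mu B)) mu A As eta"
    using cd[unfolded compat_dagger_def, THEN conjunct2, THEN conjunct2] .
  ultimately show ?thesis unfolding compat_state_dagger_def by (rule conjI)
qed

end

lemma part2:
  assumes smc: "symmetric_monoidal C" and ms: "mixed_states C mu" and cs: "compat_state_dagger C mu s"
  shows "\<exists>d. compat_dagger C mu d \<and>
                 (\<forall>A. \<forall>\<psi> \<in> Hom C (Unit C) A. d \<psi> = s \<psi>) \<and>
                 (\<forall>d'. compat_dagger C mu d' \<and> (\<forall>A. \<forall>\<psi> \<in> Hom C (Unit C) A. d' \<psi> = s \<psi>) \<longrightarrow>
                      (\<forall>A B. \<forall>f \<in> Hom C A B. d' f = d f))"
proof -
  have du: "\<forall>A. \<exists>As eta eps. is_dual C A As eta eps \<and> eps = s (Cmp C (Sy C As A) eta)"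
    using cs unfolding compat_state_dagger_def by blast
  interpret SD C s
    apply unfold_locales
    using smc cs du unfolding compat_state_dagger_def by blast+
  have mu_hom: "\<And>A. mu A \<in> Hom C (Unit C) A" using ms unfolding mixed_states_def by blast
  have agree: "\<And>A \<psi>. \<psi> \<in> Hom C (Unit C) A \<Longrightarrow> dg \<psi> = s \<psi>" using dg_eq adj_st by blast
  have isd: "is_dagger C dg"
    unfolding is_dagger_def
  proof (intro conjI allI impI ballI)
    fix A B f assume f: "f \<in> Hom C A B"
    show "dg f \<in> Hom C B A" using dg_adj[OF f] adjD by blast
    show "dg (dg f) = f" using dg_adj[OF f] dg_eq by blast
  next
    fix A show "dg (Id C A) = Id C A" using dg_eq[OF adj_id] .
  next
    fix A B D f g assume f: "f \<in> Hom C A B" and g: "g \<in> Hom C B D"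
    show "dg (Cmp C g f) = Cmp C (dg f) (dg g)"
      using dg_eq[OF adj_comp[OF dg_adj[OF f, THEN conjunct1] dg_adj[OF g, THEN conjunct1]]] .
  next
    fix A B D E f g assume f: "f \<in> Hom C A B" and g: "g \<in> Hom C D E"
    show "dg (TenA C f g) = TenA C (dg f) (dg g)"
      using dg_eq[OF adj_ten[OF dg_adj[OF f, THEN conjunct1] dg_adj[OF g, THEN conjunct1]]] .
  next
    fix \<gamma> assume c: "\<gamma> \<in> coh C"
    obtain A B where "is_iso C \<gamma> A B" using coh_iso[OF c] by blast
    then have "\<gamma> \<in> Hom C A B" by (rule iso_hom)
    then show "dg \<gamma> = cinv C \<gamma>" using dg_eq[OF adj_coh[OF c]] by blast
  qed
  have fun_eq: "(\<lambda>B. dg (mu B)) = (\<lambda>B. s (mu B))" using agree mu_hom by blast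
  have duals_d: "\<forall>A. \<exists>As eta eps. is_dual C A As eta eps \<and> eps = dg (Cmp C (Sy C As A) eta) \<and>
        disc_compat C (\<lambda>B. dg (mu B)) mu A As eta"
  proof
    fix A
    obtain As eta eps where a: "is_dual C A As eta eps" "eps = s (Cmp C (Sy C As A) eta)"
        "disc_compat C (\<lambda>B. s (mu B)) mu A As eta"
      using cs unfolding compat_state_dagger_def by blast
    have "Cmp C (Sy C As A) eta \<in> Hom C (Unit C) (Ten C A As)" using dual_homs[OF a(1)] by blast
    then have "eps = dg (Cmp C (Sy C As A) eta)" using a(2) agree by simp
    then show "\<exists>As eta eps. is_dual C A As eta eps \<and> eps = dg (Cmp C (Sy C As A) eta) \<and>
        disc_compat C (\<lambda>B. dg (mu B)) mu A As eta" using a unfolding fun_eq by blast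
  qed
  have disc: "discarding C (\<lambda>A. dg (mu A))"
    unfolding discarding_def
  proof (intro conjI allI)
    fix A show "dg (mu A) \<in> Hom C A (Unit C)" using agree[OF mu_hom] s_hom[OF mu_hom] by simp
  next
    fix A B
    have "mu (Ten C A B) = Cmp C (TenA C (mu A) (mu B)) (cinv C (Lu C (Unit C)))"
      using ms unfolding mixed_states_def by blast
    moreover have "dg (mu (Ten C A B)) = s (mu (Ten C A B))" using agree[OF mu_hom] .
    ultimately show "dg (mu (Ten C A B)) = Cmp C (Lu C (Unit C)) (TenA C (dg (mu A)) (dg (mu B)))"
      using agree[OF mu_hom] s_ten[OF mu_hom mu_hom] by simp
  next
    have "mu (Unit C) = Id C (Unit C)" using ms unfolding mixed_states_def by blast
    then show "dg (mu (Unit C)) = Id C (Unit C)" using agree[OF mu_hom, of "Unit C"] s_id by simp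
  qed
  have cd: "compat_dagger C mu dg"
    unfolding compat_dagger_def dagger_compact_def using isd disc duals_d by blast
  have uniq: "\<forall>d'. compat_dagger C mu d' \<and> (\<forall>A. \<forall>\<psi> \<in> Hom C (Unit C) A. d' \<psi> = s \<psi>) \<longrightarrow>
                      (\<forall>A B. \<forall>f \<in> Hom C A B. d' f = dg f)"
  proof (intro allI impI ballI)
    fix d' A B f
    assume h: "compat_dagger C mu d' \<and> (\<forall>A. \<forall>\<psi> \<in> Hom C (Unit C) A. d' \<psi> = s \<psi>)" and f: "f \<in> Hom C A B"
    have dd: "is_dagger C d'" using h unfolding compat_dagger_def dagger_compact_def by blast
    note D = dag_facts[OF dd]
    have "adj f (d' f) A B"
      unfolding adj_def adj0_def
    proof (intro conjI allI ballI)
      show "f \<in> Hom C A B" by (rule f)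
      show "d' f \<in> Hom C B A" using D(1)[OF f] .
      fix X
      show "TenA C f (Id C X) \<in> Hom C (Ten C A X) (Ten C B X)" using f by blast
      show "TenA C (d' f) (Id C X) \<in> Hom C (Ten C B X) (Ten C A X)" using D(1)[OF f] by blast
      fix \<psi> assume p: "\<psi> \<in> Hom C (Unit C) (Ten C A X)"
      have q: "Cmp C (TenA C f (Id C X)) \<psi> \<in> Hom C (Unit C) (Ten C B X)" using p f by blast
      have "s (Cmp C (TenA C f (Id C X)) \<psi>) = d' (Cmp C (TenA C f (Id C X)) \<psi>)" using h q by simp
      also have "\<dots> = Cmp C (d' \<psi>) (TenA C (d' f) (Id C X))"
        using D(4)[OF p Ten_hom[OF f Id_hom]] D(5)[OF f Id_hom] D(3) by simp
      also have "\<dots> = Cmp C (s \<psi>) (TenA C (d' f) (Id C X))" using h p by simp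
      finally show "s (Cmp C (TenA C f (Id C X)) \<psi>) = Cmp C (s \<psi>) (TenA C (d' f) (Id C X))" .
    qed
    then show "d' f = dg f" using dg_eq by simp
  qed
  show ?thesis using cd agree uniq by blast
qed

theorem mainTheorem2:
  fixes C :: "('o, 'm) smc_data" and mu :: "'o \<Rightarrow> 'm"
  assumes "symmetric_monoidal C" and "mixed_states C mu"
  shows "(\<forall>d. compat_dagger C mu d \<longrightarrow> compat_state_dagger C mu d) \<and>
         (\<forall>s. compat_state_dagger C mu s \<longrightarrow>
            (\<exists>d. compat_dagger C mu d \<and>
                 (\<forall>A. \<forall>\<psi> \<in> Hom C (Unit C) A. d \<psi> = s \<psi>) \<and>
                 (\<forall>d'. compat_dagger C mu d' \<and> (\<forall>A. \<forall>\<psi> \<in> Hom C (Unit C) A. d' \<psi> = s \<psi>) \<longrightarrow>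
                      (\<forall>A B. \<forall>f \<in> Hom C A B. d' f = d f))))"
proof -
  interpret SMC C by unfold_locales (rule assms(1))
  show ?thesis using part1 part2[OF assms] by blast
qed


end
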